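(* Let $G=(V,E)$ be a graph on $V=\{1,\ldots,n\}$ and $b(\mathbf x)=\sum_{ij\in E}a_{ij}x_ix_j$ with real coefficients. Let $c$ be a real number such that $\sum_{ij\in\gamma(X)}|a_{ij}|\leqslant c\left(\mu^+(X)-\mu^-(X)\right)$ for all $X\subseteq V$. Then $\operatorname{mcgap}[b](\mathbf x)\leqslant c\,\operatorname{chgap}[b](\mathbf x)$ for all $\mathbf x\in[0,1]^n$.
   Context: $B=\{(\mathbf x,z)\in[0,1]^n\times\mathbb R:z=b(\mathbf x)\}$. The McCormick polytopes are $P=\{(\mathbf x,\mathbf y)\in[0,1]^n\times[0,1]^{|E|}: y_{ij}\le x_i,\ y_{ij}\le x_j,\ y_{ij}\ge x_i+x_j-1\ \forall ij\in E\}$ and $Q=\{(\mathbf x,z)\in[0,1]^n\times\mathbb R:\exists\mathbf y\in[0,1]^{|E|}\text{ with }(\mathbf x,\mathbf y)\in P,\ z=\sum_{ij\in E}a_{ij}y_{ij}\}$. $\operatorname{cav}[b](\mathbf x)=\max\{z:(\mathbf x,z)\in\operatorname{conv}(B)\}$, $\operatorname{vex}[b](\mathbf x)=\min\{z:(\mathbf x,z)\in\operatorname{conv}(B)\}$, $\operatorname{mcu}[b](\mathbf x)=\max\{z:(\mathbf x,z)\in Q\}$, $\operatorname{mcl}[b](\mathbf x)=\min\{z:(\mathbf x,z)\in Q\}$, $\operatorname{chgap}[b]=\operatorname{cav}[b]-\operatorname{vex}[b]$, $\operatorname{mcgap}[b]=\operatorname{mcu}[b]-\operatorname{mcl}[b]$.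 For $X\subseteq V$, $\gamma(X)$ is the set of edges with both endpoints in $X$; for disjoint $U_1,U_2$, $\delta(U_1,U_2)$ is the set of edges with one endpoint in each; $\mu^+(X)=\max\{\sum_{ij\in\delta(U_1,U_2)}a_{ij}:U_1\cup U_2=X,\ U_1\cap U_2=\emptyset\}$ and $\mu^-(X)$ is the corresponding minimum. *)

theory Defs
  imports "HOL-Analysis.Analysis"
begin

text \<open>Vertices: the finite type 'n (standing for V = {1..n}); edges: 2-element vertex sets;
  coefficients a :: 'n set \<Rightarrow> real (a e = a_ij for e = {i,j}). Points x \<in> [0,1]^n are real^'n.\<close>

definition graph :: "'n set set \<Rightarrow> bool" where
  "graph E \<longleftrightarrow> (\<forall>e\<in>E. card e = 2)"

definition unitcube :: "(real^'n::finite) set" where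
  "unitcube = {x. \<forall>i. 0 \<le> x$i \<and> x$i \<le> 1}"

definition bilin :: "'n::finite set set \<Rightarrow> ('n set \<Rightarrow> real) \<Rightarrow> real^'n \<Rightarrow> real" where
  "bilin E a x = (\<Sum>e\<in>E. a e * (\<Prod>i\<in>e. x$i))"

definition graphB :: "'n::finite set set \<Rightarrow> ('n set \<Rightarrow> real) \<Rightarrow> ((real^'n) \<times> real) set" where
  "graphB E a = {(x, z). x \<in> unitcube \<and> z = bilin E a x}"

definition cav :: "'n::finite set set \<Rightarrow> ('n set \<Rightarrow> real) \<Rightarrow> real^'n \<Rightarrow> real" where
  "cav E a x = Sup {z. (x, z) \<in> convex hull (graphB E a)}"

definition vex :: "'n::finite set set \<Rightarrow> ('n set \<Rightarrow> real) \<Rightarrow> real^'n \<Rightarrow> real" where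
  "vex E a x = Inf {z. (x, z) \<in> convex hull (graphB E a)}"

text \<open>McCormick polytope P (y indexed by edges; values off E are irrelevant).\<close>
definition mcP :: "'n::finite set set \<Rightarrow> real^'n \<Rightarrow> ('n set \<Rightarrow> real) \<Rightarrow> bool" where
  "mcP E x y \<longleftrightarrow> x \<in> unitcube \<and>
     (\<forall>e\<in>E. 0 \<le> y e \<and> y e \<le> 1 \<and> (\<forall>i\<in>e. y e \<le> x$i) \<and> (\<Sum>i\<in>e. x$i) - 1 \<le> y e)"

definition mcQ :: "'n::finite set set \<Rightarrow> ('n set \<Rightarrow> real) \<Rightarrow> ((real^'n) \<times> real) set" where
  "mcQ E a = {(x, z). \<exists>y. mcP E x y \<and> z = (\<Sum>e\<in>E. a e * y e)}"

definition mcu :: "'n::finite set set \<Rightarrow> ('n set \<Rightarrow> real) \<Rightarrow> real^'n \<Rightarrow> real" where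
  "mcu E a x = Sup {z. (x, z) \<in> mcQ E a}"

definition mcl :: "'n::finite set set \<Rightarrow> ('n set \<Rightarrow> real) \<Rightarrow> real^'n \<Rightarrow> real" where
  "mcl E a x = Inf {z. (x, z) \<in> mcQ E a}"

definition chgap :: "'n::finite set set \<Rightarrow> ('n set \<Rightarrow> real) \<Rightarrow> real^'n \<Rightarrow> real" where "chgap E a x = cav E a x - vex E a x"
definition mcgap :: "'n::finite set set \<Rightarrow> ('n set \<Rightarrow> real) \<Rightarrow> real^'n \<Rightarrow> real" where "mcgap E a x = mcu E a x - mcl E a x"

definition gammaE :: "'n::finite set set \<Rightarrow> 'n set \<Rightarrow> 'n set set" where
  "gammaE E X = {e\<in>E. e \<subseteq> X}"

definition deltaE :: "'n::finite set set \<Rightarrow> 'n set \<Rightarrow> 'n set \<Rightarrow> 'n set set" where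
  "deltaE E U1 U2 = {e\<in>E. e \<inter> U1 \<noteq> {} \<and> e \<inter> U2 \<noteq> {}}"

definition mu_plus :: "'n::finite set set \<Rightarrow> ('n set \<Rightarrow> real) \<Rightarrow> 'n set \<Rightarrow> real" where
  "mu_plus E a X = Max {\<Sum>e\<in>deltaE E U1 U2. a e | U1 U2. U1 \<union> U2 = X \<and> U1 \<inter> U2 = {}}"

definition mu_minus :: "'n::finite set set \<Rightarrow> ('n set \<Rightarrow> real) \<Rightarrow> 'n set \<Rightarrow> real" where
  "mu_minus E a X = Min {\<Sum>e\<in>deltaE E U1 U2. a e | U1 U2. U1 \<union> U2 = X \<and> U1 \<inter> U2 = {}}"

end

theory Submission
  imports Defs
begin


definition mm :: "real^'n::finite \<Rightarrow> 'n \<Rightarrow> real" where "mm x k = min (x$k) (1 - x$k)"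
definition Yset :: "real^'n::finite \<Rightarrow> 'n set" where "Yset x = {k. 0 < mm x k}"
definition WW :: "real^'n::finite \<Rightarrow> 'n set \<Rightarrow> real" where "WW x e = Min (mm x ` e)"
definition GG :: "'n::finite set set \<Rightarrow> ('n set \<Rightarrow> real) \<Rightarrow> real^'n \<Rightarrow> real" where
  "GG E a x = (\<Sum>e\<in>E. \<bar>a e\<bar> * WW x e)"
definition ff :: "real \<Rightarrow> real \<Rightarrow> real" where
  "ff d t = (if t \<le> 1/2 then max (t - d) 0 / (1 - 2*d) else 1 - max (1 - t - d) 0 / (1 - 2*d))"
definition xpp :: "real^'n::finite \<Rightarrow> real \<Rightarrow> real^'n" where
  "xpp x d = (\<chi> k. ff d (x$k))"
definition vv :: "real^'n::finite \<Rightarrow> 'n set \<Rightarrow> real^'n" where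
  "vv x P = (\<chi> k. if k \<in> Yset x then (if k \<in> P then 1 else 0) else x$k)"

lemma q_bounds:
  fixes m d :: real
  assumes "0 \<le> m" "m \<le> 1/2" "0 < d" "d \<le> 1/2"
  shows "0 \<le> max (m-d) 0 / (1-2*d) \<and> max (m-d) 0 / (1-2*d) \<le> 1/2"
proof (cases "1 - 2*d = 0")
  case True then show ?thesis by simp
next
  case False
  then have p: "1 - 2*d > 0" using assms by simp
  have "max (m-d) 0 \<le> (1/2) * (1-2*d)" using assms by (simp add: max_def)
  then show ?thesis using p by (simp add: divide_le_eq)
qed

lemma ff_mm:
  assumes "0 \<le> t" "t \<le> 1" "0 < d" "d \<le> 1/2"
  shows "min (ff d t) (1 - ff d t) = max (min t (1-t) - d) 0 / (1-2*d)"
    and "0 \<le> ff d t" "ff d t \<le> 1"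
proof -
  let ?m = "min t (1-t)"
  have b: "0 \<le> max (?m-d) 0 / (1-2*d) \<and> max (?m-d) 0 / (1-2*d) \<le> 1/2"
  proof -
    have "0 \<le> ?m" "?m \<le> 1/2" using assms by (auto simp: min_def)
    from q_bounds[OF this assms(3,4)] show ?thesis .
  qed
  define q where "q = max (min t (1-t) - d) 0 / (1-2*d)"
  have q: "0 \<le> q" "q \<le> 1/2" using b unfolding q_def by auto
  have f: "ff d t = (if t \<le> 1/2 then q else 1 - q)"
  proof (cases "t \<le> 1/2")
    case True then have "min t (1-t) = t" by simp
    then show ?thesis using True by (simp add: ff_def q_def)
  next
    case False then have "min t (1-t) = 1-t" by simp
    then show ?thesis using False by (simp add: ff_def q_def)
  qed
  show "min (ff d t) (1 - ff d t) = max (min t (1-t) - d) 0 / (1-2*d)"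
    using q f unfolding q_def[symmetric] by (auto simp: min_def)
  show "0 \<le> ff d t" "ff d t \<le> 1"
    using q f by auto
qed

lemma comp_in:
  assumes "0 \<le> t" "t \<le> 1" "0 < d" "d \<le> 1/2" "d \<le> min t (1-t)"
  shows "t = d + (1-2*d) * ff d t"
proof (cases "1 - 2*d = 0")
  case True
  then have "d = 1/2" by simp
  then have "t = 1/2" using assms by (simp add: min_def split: if_splits)
  then show ?thesis using \<open>d = 1/2\<close> by (simp add: ff_def)
next
  case False
  then have p: "1 - 2*d > 0" using assms by simp
  show ?thesis
  proof (cases "t \<le> 1/2")
    case True
    then have "max (t-d) 0 = t - d" using assms by (simp add: min_def)
    then have "ff d t = (t-d)/(1-2*d)" using True by (simp add: ff_def)
    then have "(1-2*d) * ff d t = t - d" using p by simp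
    then show ?thesis by simp
  next
    case False
    then have "max (1-t-d) 0 = 1-t-d" using assms by (simp add: min_def)
    then have "ff d t = 1 - (1-t-d)/(1-2*d)" using False by (simp add: ff_def)
    then have "(1-2*d) * ff d t = (1-2*d) - (1-2*d)*((1-t-d)/(1-2*d))" by (simp add: right_diff_distrib)
    also have "(1-2*d)*((1-t-d)/(1-2*d)) = 1-t-d" using p by simp
    finally have "(1-2*d) * ff d t = (1-2*d) - (1-t-d)" .
    then show ?thesis by simp
  qed
qed

lemma comp_out:
  assumes "0 \<le> t" "t \<le> 1" "0 < d" "d \<le> 1/2" "min t (1-t) = 0"
  shows "t = 2*d*t + (1-2*d) * ff d t"
proof -
  have "t = 0 \<or> t = 1" using assms by (auto simp: min_def split: if_splits)
  then show ?thesis using assms by (auto simp: ff_def)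
qed

lemma W_rec:
  fixes m1 m2 d :: real
  assumes "0 \<le> m1" "m1 \<le> 1/2" "0 \<le> m2" "m2 \<le> 1/2" "0 < d" "d \<le> 1/2"
    "m1 = 0 \<or> d \<le> m1" "m2 = 0 \<or> d \<le> m2"
  shows "min m1 m2 = d * (if 0 < m1 \<and> 0 < m2 then 1 else 0)
     + (1-2*d) * min (max (m1-d) 0/(1-2*d)) (max (m2-d) 0/(1-2*d))"
proof (cases "1 - 2*d = 0")
  case True
  then have "d = 1/2" by simp
  then have "m1 = 0 \<or> m1 = 1/2" "m2 = 0 \<or> m2 = 1/2" using assms by auto
  then show ?thesis by (elim disjE; simp add: \<open>d = 1/2\<close>)
next
  case False
  then have p: "1 - 2*d > 0" using assms by simp
  have "(1-2*d) * min (max (m1-d) 0/(1-2*d)) (max (m2-d) 0/(1-2*d))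
        = min (max (m1-d) 0) (max (m2-d) 0)"
  proof (cases "max (m1-d) 0 \<le> max (m2-d) 0")
    case True
    then have "max (m1-d) 0/(1-2*d) \<le> max (m2-d) 0/(1-2*d)" using divide_right_mono[OF _ less_imp_le[OF p]] by blast
    then show ?thesis using True p by (simp add: min_def)
  next
    case False
    then have "max (m2-d) 0 \<le> max (m1-d) 0" by linarith
    then have "max (m2-d) 0/(1-2*d) \<le> max (m1-d) 0/(1-2*d)" using divide_right_mono[OF _ less_imp_le[OF p]] by blast
    then show ?thesis using False p by (simp add: min_def)
  qed
  then show ?thesis using assms by (cases "m1 = 0"; cases "m2 = 0"; simp add: min_def max_def)
qed




lemma mm_bounds: "x \<in> unitcube \<Longrightarrow> 0 \<le> mm x k \<and> mm x k \<le> 1/2"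
  by (auto simp: unitcube_def mm_def min_def)

lemma cube_comp: "x \<in> unitcube \<Longrightarrow> 0 \<le> x$k \<and> x$k \<le> 1"
  by (auto simp: unitcube_def)

lemma xpp_props:
  assumes x: "x \<in> unitcube" and d: "0 < d" "d \<le> 1/2"
  shows "xpp x d \<in> unitcube" "mm (xpp x d) k = max (mm x k - d) 0 / (1-2*d)"
proof -
  show "xpp x d \<in> unitcube" unfolding unitcube_def xpp_def
    using ff_mm(2,3)[OF _ _ d] cube_comp[OF x] by auto
  show "mm (xpp x d) k = max (mm x k - d) 0 / (1-2*d)"
    unfolding xpp_def mm_def using ff_mm(1)[OF _ _ d] cube_comp[OF x] by auto
qed

lemma vv_cube: "x \<in> unitcube \<Longrightarrow> vv x P \<in> unitcube"
  by (auto simp: unitcube_def vv_def)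

lemma decomp:
  assumes x: "x \<in> unitcube" and d: "0 < d" "d \<le> 1/2"
    and dm: "\<forall>k\<in>Yset x. d \<le> mm x k" and P: "P \<subseteq> Yset x"
  shows "x = d *\<^sub>R vv x P + d *\<^sub>R vv x (Yset x - P) + (1-2*d) *\<^sub>R xpp x d"
proof -
  have "x$k = d * vv x P $ k + d * vv x (Yset x - P) $ k + (1-2*d) * xpp x d $ k" for k
  proof (cases "k \<in> Yset x")
    case True
    have "vv x P $ k + vv x (Yset x - P) $ k = 1" using True by (auto simp: vv_def)
    moreover have "x$k = d + (1-2*d) * ff d (x$k)"
      using comp_in[OF _ _ d] cube_comp[OF x] dm True by (auto simp: mm_def)
    moreover have "d * vv x P $ k + d * vv x (Yset x - P) $ k = d * (vv x P $ k + vv x (Yset x - P) $ k)"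
      by (simp add: algebra_simps)
    ultimately show ?thesis by (simp add: xpp_def)
  next
    case False
    then have "mm x k = 0" using mm_bounds[OF x, of k] by (auto simp: Yset_def)
    then have "x$k = 2*d*x$k + (1-2*d) * ff d (x$k)"
      using comp_out[OF _ _ d] cube_comp[OF x] by (auto simp: mm_def)
    then show ?thesis using False by (simp add: xpp_def vv_def algebra_simps)
  qed
  then show ?thesis by (simp add: vec_eq_iff)
qed

lemma convex3:
  assumes "convex S" "p1 \<in> S" "p2 \<in> S" "p3 \<in> S" "0 \<le> d" "d \<le> 1/2"
  shows "d *\<^sub>R p1 + d *\<^sub>R p2 + (1-2*d) *\<^sub>R p3 \<in> S"
proof -
  have q: "(1/2) *\<^sub>R p1 + (1/2) *\<^sub>R p2 \<in> S" using assms(1-3) by (intro convexD) auto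
  have "(2*d) *\<^sub>R ((1/2) *\<^sub>R p1 + (1/2) *\<^sub>R p2) + (1 - 2*d) *\<^sub>R p3 \<in> S"
    using assms q by (intro convexD) auto
  moreover have "(2*d) *\<^sub>R ((1/2) *\<^sub>R p1 + (1/2) *\<^sub>R p2) = d *\<^sub>R p1 + d *\<^sub>R p2"
    by (simp add: scaleR_right_distrib)
  ultimately show ?thesis by simp
qed

lemma edge2: "card e = 2 \<Longrightarrow> \<exists>i j. i \<noteq> j \<and> e = {i,j}"
  by (auto simp: card_2_iff)

lemma edge_ident:
  assumes e: "card e = 2" and P: "P \<subseteq> Yset x"
  shows "(\<Prod>k\<in>e. vv x P $ k) + (\<Prod>k\<in>e. vv x (Yset x - P) $ k)
     + (if e \<inter> P \<noteq> {} \<and> e \<inter> (Yset x - P) \<noteq> {} then 1 else 0)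
     = (\<Prod>k\<in>e. vv x {} $ k) + (\<Prod>k\<in>e. vv x (Yset x) $ k)"
proof -
  obtain i j where ij: "i \<noteq> j" "e = {i,j}" using edge2[OF e] by blast
  show ?thesis using ij P
    by (cases "i \<in> Yset x"; cases "j \<in> Yset x"; cases "i \<in> P"; cases "j \<in> P"; auto simp: vv_def)
qed

lemma WW_edge: "card e = 2 \<Longrightarrow> e = {i,j} \<Longrightarrow> WW x e = min (mm x i) (mm x j)"
  by (simp add: WW_def)




lemma finite_E: "finite (E :: 'n::finite set set)"
  by simp

lemma bilin_sum:
  assumes g: "graph E" and P: "P \<subseteq> Yset x"
  shows "bilin E a (vv x P) + bilin E a (vv x (Yset x - P)) + (\<Sum>e\<in>deltaE E P (Yset x - P). a e)
       = bilin E a (vv x {}) + bilin E a (vv x (Yset x))"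
proof -
  have fE: "finite E" by simp
  have s1: "(\<Sum>e\<in>deltaE E P (Yset x - P). a e)
      = (\<Sum>e\<in>E. a e * (if e \<inter> P \<noteq> {} \<and> e \<inter> (Yset x - P) \<noteq> {} then 1 else 0))"
    unfolding deltaE_def by (subst sum.inter_filter[OF fE]) (rule sum.cong, auto)
  have s2: "a e * (\<Prod>k\<in>e. vv x P $ k) + a e * (\<Prod>k\<in>e. vv x (Yset x - P) $ k)
     + a e * (if e \<inter> P \<noteq> {} \<and> e \<inter> (Yset x - P) \<noteq> {} then 1 else 0)
     = a e * (\<Prod>k\<in>e. vv x {} $ k) + a e * (\<Prod>k\<in>e. vv x (Yset x) $ k)" if "e \<in> E" for e
  proof -
    have "card e = 2" using g that by (auto simp: graph_def)
    from arg_cong[OF edge_ident[OF this P], of "\<lambda>t. a e * t"] show ?thesis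
      by (simp add: distrib_left)
  qed
  have "(\<Sum>e\<in>E. a e * (\<Prod>k\<in>e. vv x P $ k) + a e * (\<Prod>k\<in>e. vv x (Yset x - P) $ k)
     + a e * (if e \<inter> P \<noteq> {} \<and> e \<inter> (Yset x - P) \<noteq> {} then 1 else 0))
     = (\<Sum>e\<in>E. a e * (\<Prod>k\<in>e. vv x {} $ k) + a e * (\<Prod>k\<in>e. vv x (Yset x) $ k))"
    by (rule sum.cong[OF refl]) (rule s2)
  then show ?thesis unfolding bilin_def s1 by (simp only: sum.distrib)
qed

lemma mu_set:
  "{\<Sum>e\<in>deltaE E U1 U2. a e | U1 U2. U1 \<union> U2 = Y \<and> U1 \<inter> U2 = {}}
   = (\<lambda>U. \<Sum>e\<in>deltaE E U (Y - U). a e) ` Pow Y"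
proof (rule set_eqI, rule iffI)
  fix s assume "s \<in> {\<Sum>e\<in>deltaE E U1 U2. a e | U1 U2. U1 \<union> U2 = Y \<and> U1 \<inter> U2 = {}}"
  then obtain U1 U2 where h: "s = (\<Sum>e\<in>deltaE E U1 U2. a e)" "U1 \<union> U2 = Y" "U1 \<inter> U2 = {}"
    unfolding mem_Collect_eq by blast
  have "U2 = Y - U1" using h(2,3) by blast
  then have "s = (\<lambda>U. \<Sum>e\<in>deltaE E U (Y - U). a e) U1" using h(1) by simp
  moreover have "U1 \<in> Pow Y" using h(2) by blast
  ultimately show "s \<in> (\<lambda>U. \<Sum>e\<in>deltaE E U (Y - U). a e) ` Pow Y" by (rule image_eqI)
next
  fix s assume "s \<in> (\<lambda>U. \<Sum>e\<in>deltaE E U (Y - U). a e) ` Pow Y"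
  then obtain U where h: "U \<in> Pow Y" "s = (\<Sum>e\<in>deltaE E U (Y - U). a e)" by (rule imageE) simp
  show "s \<in> {\<Sum>e\<in>deltaE E U1 U2. a e | U1 U2. U1 \<union> U2 = Y \<and> U1 \<inter> U2 = {}}"
    unfolding mem_Collect_eq
  proof (intro exI conjI)
    show "s = (\<Sum>e\<in>deltaE E U (Y - U). a e)" by (rule h(2))
    show "U \<union> (Y - U) = Y" using h(1) by blast
    show "U \<inter> (Y - U) = {}" by blast
  qed
qed

lemma mu_attained:
  fixes Y :: "'n::finite set"
  shows "\<exists>P1. P1 \<subseteq> Y \<and> (\<Sum>e\<in>deltaE E P1 (Y - P1). a e) = mu_plus E a Y"
    and "\<exists>P2. P2 \<subseteq> Y \<and> (\<Sum>e\<in>deltaE E P2 (Y - P2). a e) = mu_minus E a Y"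
proof -
  let ?S = "(\<lambda>U. \<Sum>e\<in>deltaE E U (Y - U). a e) ` Pow Y"
  have f: "finite ?S" "?S \<noteq> {}" by (rule finite_imageI, simp) blast
  have "mu_plus E a Y \<in> ?S" unfolding mu_plus_def mu_set using Max_in[OF f] .
  then show "\<exists>P1. P1 \<subseteq> Y \<and> (\<Sum>e\<in>deltaE E P1 (Y - P1). a e) = mu_plus E a Y" by (rule imageE) (rule exI, rule conjI, simp, simp)
  have "mu_minus E a Y \<in> ?S" unfolding mu_minus_def mu_set using Min_in[OF f] .
  then show "\<exists>P2. P2 \<subseteq> Y \<and> (\<Sum>e\<in>deltaE E P2 (Y - P2). a e) = mu_minus E a Y" by (rule imageE) (rule exI, rule conjI, simp, simp)
qed

lemma G_rec:
  assumes g: "graph E" and x: "x \<in> unitcube" and d: "0 < d" "d \<le> 1/2"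
    and dm: "\<forall>k\<in>Yset x. d \<le> mm x k"
  shows "GG E a x = d * (\<Sum>e\<in>gammaE E (Yset x). \<bar>a e\<bar>) + (1-2*d) * GG E a (xpp x d)"
proof -
  have fE: "finite E" by simp
  have m0: "mm x k = 0 \<or> d \<le> mm x k" for k
  proof -
    have "0 < mm x k \<longrightarrow> d \<le> mm x k" using dm by (simp add: Yset_def)
    then show ?thesis using mm_bounds[OF x, of k] by (cases "0 < mm x k") auto
  qed
  have W: "WW x e = d * (if e \<subseteq> Yset x then 1 else 0) + (1-2*d) * WW (xpp x d) e" if "e \<in> E" for e
  proof -
    have c: "card e = 2" using g that by (auto simp: graph_def)
    obtain i j where ij: "i \<noteq> j" "e = {i,j}" using edge2[OF c] by blast
    have "WW x e = min (mm x i) (mm x j)" using WW_edge[OF c ij(2)] .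
    also have "\<dots> = d * (if 0 < mm x i \<and> 0 < mm x j then 1 else 0)
     + (1-2*d) * min (max (mm x i-d) 0/(1-2*d)) (max (mm x j-d) 0/(1-2*d))"
      using W_rec[OF conjunct1[OF mm_bounds[OF x]] conjunct2[OF mm_bounds[OF x]]
          conjunct1[OF mm_bounds[OF x]] conjunct2[OF mm_bounds[OF x]] d m0 m0] .
    also have "\<dots> = d * (if e \<subseteq> Yset x then 1 else 0) + (1-2*d) * WW (xpp x d) e"
      using WW_edge[OF c ij(2), of "xpp x d"] xpp_props(2)[OF x d] ij by (simp add: Yset_def)
    finally show ?thesis .
  qed
  have "GG E a x = (\<Sum>e\<in>E. d * (if e \<subseteq> Yset x then \<bar>a e\<bar> else 0) + (1-2*d) * (\<bar>a e\<bar> * WW (xpp x d) e))"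
    unfolding GG_def by (rule sum.cong[OF refl]) (simp add: W algebra_simps)
  also have "\<dots> = d * (\<Sum>e\<in>E. if e \<subseteq> Yset x then \<bar>a e\<bar> else 0) + (1-2*d) * GG E a (xpp x d)"
    by (simp add: sum.distrib sum_distrib_left GG_def)
  also have "(\<Sum>e\<in>E. if e \<subseteq> Yset x then \<bar>a e\<bar> else 0) = (\<Sum>e\<in>gammaE E (Yset x). \<bar>a e\<bar>)"
    unfolding gammaE_def by (rule sum.inter_filter[OF fE, symmetric])
  finally show ?thesis .
qed




lemma main:
  fixes E :: "'n::finite set set" and a :: "'n set \<Rightarrow> real" and c :: real
  assumes g: "graph E"
    and hyp: "\<forall>X. (\<Sum>e\<in>gammaE E X. \<bar>a e\<bar>) \<le> c * (mu_plus E a X - mu_minus E a X)"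
  shows "x \<in> unitcube \<Longrightarrow> \<exists>z1 z2. (x,z1) \<in> convex hull (graphB E a) \<and> (x,z2) \<in> convex hull (graphB E a)
          \<and> GG E a x \<le> c * (z1 - z2)"
proof (induction "card (Yset x)" arbitrary: x rule: less_induct)
  case less
  note x = less.prems
  let ?H = "convex hull (graphB E a)"
  have inB: "(y, bilin E a y) \<in> ?H" if "y \<in> unitcube" for y
    by (rule hull_inc) (simp add: graphB_def that)
  show ?case
  proof (cases "Yset x = {}")
    case True
    have "GG E a x = 0" unfolding GG_def
    proof (rule sum.neutral, rule ballI)
      fix e assume "e \<in> E"
      then have c: "card e = 2" using g by (auto simp: graph_def)
      obtain i j where ij: "i \<noteq> j" "e = {i,j}" using edge2[OF c] by blast
      have "mm x k = 0" for k
      proof -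
        have "\<not> 0 < mm x k" using True unfolding Yset_def by blast
        then show ?thesis using mm_bounds[OF x, of k] by linarith
      qed
      then show "\<bar>a e\<bar> * WW x e = 0" using WW_edge[OF c ij(2)] by simp
    qed
    then show ?thesis using inB[OF x] by (intro exI[of _ "bilin E a x"]) auto
  next
    case False
    define Y where "Y = Yset x"
    define d where "d = Min (mm x ` Y)"
    have fY: "finite Y" by simp
    have YnE: "Y \<noteq> {}" using False Y_def by simp
    have d_in: "d \<in> mm x ` Y" unfolding d_def using Min_in fY YnE by blast
    then obtain k0 where k0: "k0 \<in> Y" "mm x k0 = d" by blast
    have dle: "\<forall>k\<in>Y. d \<le> mm x k" unfolding d_def using fY by auto
    have dpos: "0 < d" using k0 unfolding Y_def Yset_def by auto
    have dhalf: "d \<le> 1/2" using k0 mm_bounds[OF x] by metis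
    note dd = dpos dhalf
    define x2 where "x2 = xpp x d"
    have x2: "x2 \<in> unitcube" unfolding x2_def using xpp_props(1)[OF x dd] .
    have mm2: "mm x2 k = max (mm x k - d) 0 / (1-2*d)" for k
      unfolding x2_def using xpp_props(2)[OF x dd] .
    have sub: "Yset x2 \<subset> Y"
    proof
      show "Yset x2 \<subseteq> Y"
      proof
        fix k assume k: "k \<in> Yset x2"
        show "k \<in> Y"
        proof (rule ccontr)
          assume "k \<notin> Y"
          then have "mm x k \<le> d" using mm_bounds[OF x, of k] dpos unfolding Y_def Yset_def by auto
          then have "mm x2 k = 0" using mm2[of k] by simp
          then show False using k unfolding Yset_def by simp
        qed
      qed
      have "mm x2 k0 = 0" using mm2[of k0] k0 by simp
      then have "k0 \<notin> Yset x2" unfolding Yset_def by simp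
      then show "Yset x2 \<noteq> Y" using k0 by blast
    qed
    have "card (Yset x2) < card (Yset x)" using psubset_card_mono[OF fY sub] Y_def by simp
    from less.hyps[OF this x2] obtain z1' z2' where
      z': "(x2,z1') \<in> ?H" "(x2,z2') \<in> ?H" "GG E a x2 \<le> c * (z1' - z2')" by blast
    obtain P1 where P1: "P1 \<subseteq> Y" "(\<Sum>e\<in>deltaE E P1 (Y - P1). a e) = mu_plus E a Y"
      using mu_attained(1) by blast
    obtain P2 where P2: "P2 \<subseteq> Y" "(\<Sum>e\<in>deltaE E P2 (Y - P2). a e) = mu_minus E a Y"
      using mu_attained(2) by blast
    define K where "K = bilin E a (vv x {}) + bilin E a (vv x Y)"
    have S: "bilin E a (vv x P) + bilin E a (vv x (Y - P)) = K - (\<Sum>e\<in>deltaE E P (Y - P). a e)"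
      if "P \<subseteq> Y" for P
      using bilin_sum[OF g, where P=P and x=x and a=a] that unfolding K_def Y_def by linarith
    have comb: "(x, d * bilin E a (vv x P) + d * bilin E a (vv x (Y - P)) + (1-2*d) * z) \<in> ?H"
      if "P \<subseteq> Y" "(x2, z) \<in> ?H" for P z
    proof -
      have "d *\<^sub>R (vv x P, bilin E a (vv x P)) + d *\<^sub>R (vv x (Y-P), bilin E a (vv x (Y-P)))
          + (1-2*d) *\<^sub>R (x2, z) \<in> ?H"
        by (rule convex3[OF convex_convex_hull inB[OF vv_cube[OF x]] inB[OF vv_cube[OF x]] that(2)])
           (use dd in auto)
      moreover have "x = d *\<^sub>R vv x P + d *\<^sub>R vv x (Y - P) + (1-2*d) *\<^sub>R x2"
        unfolding x2_def Y_def by (rule decomp[OF x dd]) (use dle that Y_def in auto)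
      ultimately show ?thesis by (simp add: prod_eq_iff)
    qed
    define z1 where "z1 = d * bilin E a (vv x P2) + d * bilin E a (vv x (Y - P2)) + (1-2*d) * z1'"
    define z2 where "z2 = d * bilin E a (vv x P1) + d * bilin E a (vv x (Y - P1)) + (1-2*d) * z2'"
    have h1: "(x, z1) \<in> ?H" unfolding z1_def using comb[OF P2(1) z'(1)] .
    have h2: "(x, z2) \<in> ?H" unfolding z2_def using comb[OF P1(1) z'(2)] .
    have zd: "z1 - z2 = d * (mu_plus E a Y - mu_minus E a Y) + (1-2*d) * (z1' - z2')"
    proof -
      have e1: "bilin E a (vv x P2) + bilin E a (vv x (Y - P2)) = K - mu_minus E a Y"
        using S[OF P2(1)] P2(2) by simp
      have e2: "bilin E a (vv x P1) + bilin E a (vv x (Y - P1)) = K - mu_plus E a Y"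
        using S[OF P1(1)] P1(2) by simp
      have "z1 = d * (K - mu_minus E a Y) + (1-2*d) * z1'"
        unfolding z1_def e1[symmetric] by (simp add: distrib_left)
      moreover have "z2 = d * (K - mu_plus E a Y) + (1-2*d) * z2'"
        unfolding z2_def e2[symmetric] by (simp add: distrib_left)
      ultimately show ?thesis by (simp add: algebra_simps)
    qed
    have "c * (z1 - z2) = d * (c * (mu_plus E a Y - mu_minus E a Y)) + (1-2*d) * (c * (z1' - z2'))"
      unfolding zd by (simp add: algebra_simps)
    moreover have "GG E a x = d * (\<Sum>e\<in>gammaE E Y. \<bar>a e\<bar>) + (1-2*d) * GG E a x2"
      unfolding x2_def Y_def by (rule G_rec[OF g x dd]) (use dle Y_def in auto)
    moreover have "d * (\<Sum>e\<in>gammaE E Y. \<bar>a e\<bar>) \<le> d * (c * (mu_plus E a Y - mu_minus E a Y))"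
      using hyp dpos by (intro mult_left_mono) auto
    moreover have "(1-2*d) * GG E a x2 \<le> (1-2*d) * (c * (z1' - z2'))"
      using z'(3) dhalf by (intro mult_left_mono) auto
    ultimately have "GG E a x \<le> c * (z1 - z2)" by linarith
    then show ?thesis using h1 h2 by blast
  qed
qed




lemma edge_bound:
  fixes xi xj y y' :: real
  assumes "0 \<le> xi" "xi \<le> 1" "0 \<le> xj" "xj \<le> 1" "y \<le> xi" "y \<le> xj" "0 \<le> y'" "xi + xj - 1 \<le> y'"
  shows "y - y' \<le> min (min xi (1-xi)) (min xj (1-xj))"
  using assms by (simp add: min_def)

lemma mc_le:
  assumes g: "graph E" and x: "x \<in> unitcube"
  shows "mcgap E a x \<le> GG E a x"
proof -
  let ?F = "{z. (x, z) \<in> mcQ E a}"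
  define y0 where "y0 e = max 0 ((\<Sum>i\<in>e. x$i) - 1)" for e
  have yb: "0 \<le> y0 e \<and> y0 e \<le> 1 \<and> (\<forall>k\<in>e. y0 e \<le> x$k) \<and> (\<Sum>i\<in>e. x $ i) - 1 \<le> y0 e"
    if "e \<in> E" for e
  proof -
    have c: "card e = 2" using g that by (auto simp: graph_def)
    obtain i j where ij: "i \<noteq> j" "e = {i,j}" using edge2[OF c] by blast
    have b: "0 \<le> x$i" "x$i \<le> 1" "0 \<le> x$j" "x$j \<le> 1" using cube_comp[OF x] by auto
    show ?thesis using ij b by (auto simp: y0_def)
  qed
  have "mcP E x y0" unfolding mcP_def using x yb by blast
  then have ne: "?F \<noteq> {}" unfolding mcQ_def by blast
  have diff: "z - z' \<le> GG E a x" if zF: "z \<in> ?F" and z'F: "z' \<in> ?F" for z z'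
  proof -
    obtain y where y: "mcP E x y" "z = (\<Sum>e\<in>E. a e * y e)" using zF unfolding mcQ_def by blast
    obtain y' where y': "mcP E x y'" "z' = (\<Sum>e\<in>E. a e * y' e)" using z'F unfolding mcQ_def by blast
    have "a e * y e - a e * y' e \<le> \<bar>a e\<bar> * WW x e" if "e \<in> E" for e
    proof -
      have c: "card e = 2" using g that by (auto simp: graph_def)
      obtain i j where ij: "i \<noteq> j" "e = {i,j}" using edge2[OF c] by blast
      have b: "0 \<le> x$i" "x$i \<le> 1" "0 \<le> x$j" "x$j \<le> 1" using cube_comp[OF x] by auto
      have W: "WW x e = min (min (x$i) (1-x$i)) (min (x$j) (1-x$j))"
        using WW_edge[OF c ij(2)] by (simp add: mm_def)
      have "y e - y' e \<le> WW x e" unfolding W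
        by (rule edge_bound[OF b]) (use y(1) y'(1) that ij in \<open>auto simp: mcP_def\<close>)
      moreover have "y' e - y e \<le> WW x e" unfolding W
        by (rule edge_bound[OF b]) (use y(1) y'(1) that ij in \<open>auto simp: mcP_def\<close>)
      ultimately have "\<bar>y e - y' e\<bar> \<le> WW x e" by linarith
      then have "\<bar>a e\<bar> * \<bar>y e - y' e\<bar> \<le> \<bar>a e\<bar> * WW x e" by (simp add: mult_left_mono)
      moreover have "a e * (y e - y' e) \<le> \<bar>a e\<bar> * \<bar>y e - y' e\<bar>"
        by (metis abs_ge_self abs_mult)
      ultimately show ?thesis by (simp add: right_diff_distrib)
    qed
    then have "(\<Sum>e\<in>E. a e * y e - a e * y' e) \<le> GG E a x"
      unfolding GG_def by (rule sum_mono)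
    then show ?thesis using y(2) y'(2) by (simp add: sum_subtractf)
  qed
  have "Sup ?F \<le> Inf ?F + GG E a x"
  proof (rule cSup_least[OF ne])
    fix z assume z: "z \<in> ?F"
    have "z - GG E a x \<le> Inf ?F"
      by (rule cInf_greatest[OF ne]) (use diff z in force)
    then show "z \<le> Inf ?F + GG E a x" by simp
  qed
  then show ?thesis unfolding mcgap_def mcu_def mcl_def by simp
qed

lemma bilin_bound:
  assumes x: "x \<in> unitcube"
  shows "\<bar>bilin E a x\<bar> \<le> (\<Sum>e\<in>E. \<bar>a e\<bar>)"
proof -
  have "\<bar>bilin E a x\<bar> \<le> (\<Sum>e\<in>E. \<bar>a e * (\<Prod>i\<in>e. x$i)\<bar>)"
    unfolding bilin_def by (rule sum_abs)
  also have "\<dots> \<le> (\<Sum>e\<in>E. \<bar>a e\<bar>)"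
  proof (rule sum_mono)
    fix e
    have p0: "0 \<le> (\<Prod>i\<in>e. x$i)" using cube_comp[OF x] by (simp add: prod_nonneg)
    have p1: "(\<Prod>i\<in>e. x$i) \<le> 1" using cube_comp[OF x] by (simp add: prod_le_1)
    have "\<bar>a e * (\<Prod>i\<in>e. x$i)\<bar> = \<bar>a e\<bar> * (\<Prod>i\<in>e. x$i)" using p0 by (simp add: abs_mult)
    also have "\<dots> \<le> \<bar>a e\<bar> * 1" using p1 by (intro mult_left_mono) auto
    finally show "\<bar>a e * (\<Prod>i\<in>e. x$i)\<bar> \<le> \<bar>a e\<bar>" by simp
  qed
  finally show ?thesis .
qed

lemma hull_bound:
  assumes "p \<in> convex hull (graphB E a)"
  shows "\<bar>snd p\<bar> \<le> (\<Sum>e\<in>E. \<bar>a e\<bar>)"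
proof -
  let ?K = "(\<Sum>e\<in>E. \<bar>a e\<bar>)"
  have cv: "convex {p :: (real^'a) \<times> real. \<bar>snd p\<bar> \<le> ?K}"
    unfolding convex_def
  proof (intro allI impI ballI, clarsimp)
    fix u v :: real and z1 z2 :: real
    assume h: "\<bar>z1\<bar> \<le> ?K" "\<bar>z2\<bar> \<le> ?K" "0 \<le> u" "0 \<le> v" "u + v = 1"
    have "\<bar>u * z1 + v * z2\<bar> \<le> u * \<bar>z1\<bar> + v * \<bar>z2\<bar>"
      using h by (simp add: abs_triangle_ineq[THEN order_trans] abs_mult)
    also have "\<dots> \<le> u * ?K + v * ?K" using h by (intro add_mono mult_left_mono) auto
    also have "\<dots> = ?K" using h by (simp add: distrib_right[symmetric])
    finally show "\<bar>u * z1 + v * z2\<bar> \<le> ?K" .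
  qed
  have "graphB E a \<subseteq> {p. \<bar>snd p\<bar> \<le> ?K}"
    using bilin_bound unfolding graphB_def by auto
  then have "convex hull (graphB E a) \<subseteq> {p. \<bar>snd p\<bar> \<le> ?K}"
    by (rule hull_minimal) (rule cv)
  then show ?thesis using assms by auto
qed

lemma chgap_ge:
  assumes "(x, z1) \<in> convex hull (graphB E a)" "(x, z2) \<in> convex hull (graphB E a)"
  shows "z1 - z2 \<le> chgap E a x"
proof -
  let ?F = "{z. (x, z) \<in> convex hull (graphB E a)}"
  have bd: "bdd_above ?F" "bdd_below ?F"
    using hull_bound[where E=E and a=a] unfolding bdd_above_def bdd_below_def
    by (metis (no_types, lifting) abs_le_D1 abs_le_D2 minus_le_iff mem_Collect_eq snd_conv)+
  have "z1 \<le> Sup ?F" using assms(1) bd(1) by (intro cSup_upper) auto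
  moreover have "Inf ?F \<le> z2" using assms(2) bd(2) by (intro cInf_lower) auto
  ultimately show ?thesis unfolding chgap_def cav_def vex_def by simp
qed

theorem corollary1:
  fixes E :: "'n::finite set set" and a :: "'n set \<Rightarrow> real" and c :: real
  assumes "graph E"
    and "\<forall>X. (\<Sum>e\<in>gammaE E X. \<bar>a e\<bar>) \<le> c * (mu_plus E a X - mu_minus E a X)"
  shows "\<forall>x\<in>unitcube. mcgap E a x \<le> c * chgap E a x"
proof
  fix x :: "real^'n" assume x: "x \<in> unitcube"
  note g = assms(1) and hyp = assms(2)
  show "mcgap E a x \<le> c * chgap E a x"
  proof (cases "0 \<le> c")
    case True
    obtain z1 z2 where z: "(x,z1) \<in> convex hull (graphB E a)" "(x,z2) \<in> convex hull (graphB E a)"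
      "GG E a x \<le> c * (z1 - z2)" using main[OF g hyp x] by blast
    have "mcgap E a x \<le> GG E a x" by (rule mc_le[OF g x, where a=a])
    also have "\<dots> \<le> c * (z1 - z2)" by (rule z(3))
    also have "\<dots> \<le> c * chgap E a x" using chgap_ge[OF z(1,2)] True by (rule mult_left_mono)
    finally show ?thesis .
  next
    case False
    let ?S = "(\<lambda>U. \<Sum>e\<in>deltaE E U (UNIV - U). a e) ` Pow (UNIV :: 'n set)"
    have f: "finite ?S" "?S \<noteq> {}" by (rule finite_imageI, simp) blast
    have "mu_minus E a UNIV \<le> mu_plus E a UNIV"
      unfolding mu_plus_def mu_minus_def mu_set using Min_le[OF f(1) Max_in[OF f]] .
    then have "c * (mu_plus E a UNIV - mu_minus E a UNIV) \<le> 0"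
      using False by (simp add: mult_nonpos_nonneg)
    moreover have "gammaE E UNIV = E" unfolding gammaE_def by auto
    ultimately have s0: "(\<Sum>e\<in>E. \<bar>a e\<bar>) \<le> 0" using hyp[rule_format, of UNIV] by simp
    then have K0: "(\<Sum>e\<in>E. \<bar>a e\<bar>) = 0" by (simp add: sum_nonneg antisym)
    then have a0: "\<forall>e\<in>E. a e = 0" by (simp add: sum_nonneg_eq_0_iff)
    have "GG E a x = 0" unfolding GG_def using a0 by simp
    then have m: "mcgap E a x \<le> 0" using mc_le[OF g x, where a=a] by simp
    let ?F = "{z. (x, z) \<in> convex hull (graphB E a)}"
    have "(x, bilin E a x) \<in> convex hull (graphB E a)"
      by (rule hull_inc) (simp add: graphB_def x)
    then have "0 \<in> ?F" using hull_bound[where E=E and a=a] K0 by fastforce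
    moreover have "z \<in> ?F \<Longrightarrow> z = 0" for z using hull_bound[where E=E and a=a, of "(x,z)"] K0 by simp
    ultimately have "?F = {0}" by blast
    then have "chgap E a x = 0" unfolding chgap_def cav_def vex_def by simp
    then show ?thesis using m by simp
  qed
qed


end
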